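(* As $n\to\infty$, $$E(n)=2^{n+1}\left(\frac1n-\frac{3}{n^2}+O\!\left(\frac1{n^3}\right)\right),$$ where $E(n)=(-1)^n n!\{R_n(2)-R_n(1)R_{n-1}(1)\}$ with $R_n(x)=\sum_{k=0}^n (-x)^k/k!$.
   Context: $E(n)$ is the optimal value of the linear programming relaxation (variables $x_u\in[0,1]$, $u\in\mathbb{F}_2^n$) of the problem of minimizing $\sum_u x_u$ subject to $x_v+\sum_{u\supset v,\ \mathrm{dist}(u,v)=1}x_u\ge1$ for all $v\in\mathbb{F}_2^n$; it equals the stated closed form. *)

theory Defs
  imports Complex_Main "HOL-Library.Landau_Symbols"
begin

definition R :: "nat \<Rightarrow> real \<Rightarrow> real" where
  "R n x = (\<Sum>k = 0..n. (- x) ^ k / fact k)"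

text \<open>E(n) = (-1)^n n! (R_n(2) - R_n(1) R_{n-1}(1)).  (For n = 0, n - 1 truncates to 0;
  irrelevant for the asymptotic statement.)\<close>
definition E :: "nat \<Rightarrow> real" where
  "E n = (-1) ^ n * fact n * (R n 2 - R n 1 * R (n - 1) 1)"

end

theory Submission
  imports Defs "HOL-Real_Asymp.Real_Asymp"
begin

definition ff :: "nat \<Rightarrow> nat \<Rightarrow> real" where
  "ff i j = (-1) ^ (i + j) / (fact i * fact j)"

lemma R2: "R n 2 = (\<Sum>i\<le>n. \<Sum>j\<le>n-i. ff i j)"
proof -
  have t: "(-2::real) ^ k / fact k = (\<Sum>i\<le>k. ff i (k - i))" for k
  proof -
    have "(-2::real) ^ k / fact k = (-1)^k * (\<Sum>i\<le>k. real (k choose i)) / fact k"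
    proof -
      have "(\<Sum>i\<le>k. real (k choose i)) = 2 ^ k"
        by (metis choose_row_sum of_nat_sum of_nat_power of_nat_numeral)
      moreover have "(-2::real) ^ k = (-1)^k * 2^k"
        by (simp add: power_mult_distrib[symmetric])
      ultimately show ?thesis by simp
    qed
    also have "\<dots> = (\<Sum>i\<le>k. (-1)^k * (real (k choose i) / fact k))"
      by (simp add: sum_distrib_left sum_divide_distrib)
    also have "\<dots> = (\<Sum>i\<le>k. ff i (k - i))"
      by (rule sum.cong) (auto simp: ff_def binomial_fact)
    finally show ?thesis .
  qed
  have "R n 2 = (\<Sum>k\<le>n. \<Sum>i\<le>k. ff i (k - i))"
    unfolding R_def using t by (simp add: atMost_atLeast0)
  also have "\<dots> = (\<Sum>(i,j)\<in>{(i,j). i+j \<le> n}. ff i j)"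
    by (rule sum.triangle_reindex_eq[symmetric])
  also have "{(i,j). i+j \<le> n} = Sigma {..n} (\<lambda>i. {..n-i})" by auto
  also have "(\<Sum>(i,j)\<in>Sigma {..n} (\<lambda>i. {..n-i}). ff i j) = (\<Sum>i\<le>n. \<Sum>j\<le>n-i. ff i j)"
    by (rule sum.Sigma[symmetric]) auto
  finally show ?thesis .
qed

lemma Rprod: "R n 1 * R (n-1) 1 = (\<Sum>i\<le>n. \<Sum>j\<le>n-1. ff i j)"
  unfolding R_def by (simp add: sum_product ff_def power_add atMost_atLeast0)

lemma inner_diff:
  assumes "1 \<le> i" "i \<le> n"
  shows "(\<Sum>j\<le>n-i. ff i j) - (\<Sum>j\<le>n-1. ff i j) = - (\<Sum>m\<in>{1..<i}. ff i (n+m-i))"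
proof -
  have "{..n-1} = {..n-i} \<union> {n-i+1..n-1}" using assms by auto
  hence "(\<Sum>j\<le>n-1. ff i j) = (\<Sum>j\<le>n-i. ff i j) + (\<Sum>j\<in>{n-i+1..n-1}. ff i j)"
    by (simp add: sum.union_disjoint[symmetric] ivl_disj_int)
  moreover have "(\<Sum>j\<in>{n-i+1..n-1}. ff i j) = (\<Sum>m\<in>{1..<i}. ff i (n+m-i))"
    by (rule sum.reindex_bij_witness[where i="\<lambda>m. n+m-i" and j="\<lambda>j. j+i-n"]) (use assms in auto)
  ultimately show ?thesis by simp
qed

lemma Rdiff:
  assumes "1 \<le> n"
  shows "R n 2 - R n 1 * R (n-1) 1 = ff 0 n - (\<Sum>i\<in>{1..n}. \<Sum>m\<in>{1..<i}. ff i (n+m-i))"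
proof -
  have "R n 2 - R n 1 * R (n-1) 1 = (\<Sum>i\<le>n. (\<Sum>j\<le>n-i. ff i j) - (\<Sum>j\<le>n-1. ff i j))"
    unfolding R2 Rprod by (simp add: sum_subtractf)
  also have "{..n} = insert 0 {1..n}" by auto
  also have "(\<Sum>i\<in>insert 0 {1..n}. (\<Sum>j\<le>n-i. ff i j) - (\<Sum>j\<le>n-1. ff i j))
     = ((\<Sum>j\<le>n. ff 0 j) - (\<Sum>j\<le>n-1. ff 0 j)) + (\<Sum>i\<in>{1..n}. - (\<Sum>m\<in>{1..<i}. ff i (n+m-i)))"
  proof -
    have eq: "(\<Sum>i\<in>{1..n}. (\<Sum>j\<le>n-i. ff i j) - (\<Sum>j\<le>n-1. ff i j)) = (\<Sum>i\<in>{1..n}. - (\<Sum>m\<in>{1..<i}. ff i (n+m-i)))"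
      by (rule sum.cong[OF refl]) (rule inner_diff, auto)
    have z: "(0::nat) \<notin> {1..n}" by simp
    show ?thesis
      unfolding sum.insert[OF finite_atLeastAtMost z] diff_zero eq ..
  qed
  also have "(\<Sum>j\<le>n. ff 0 j) = (\<Sum>j\<le>n-1. ff 0 j) + ff 0 n"
  proof -
    obtain k where "n = Suc k" using assms by (cases n) auto
    thus ?thesis by simp
  qed
  finally show ?thesis by (simp add: sum_negf)
qed

lemma swap_tri: "(\<Sum>i\<in>{1..n}. \<Sum>m\<in>{1..<i}. g i m) = (\<Sum>m\<in>{1..<(n::nat)}. \<Sum>i\<in>{m+1..n}. g i m)"
proof -
  have "(\<Sum>i\<in>{1..n}. \<Sum>m\<in>{m. m \<in> {1..<n} \<and> m < i}. g i m) = (\<Sum>m\<in>{1..<n}. \<Sum>i\<in>{i. i \<in> {1..n} \<and> m < i}. g i m)"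
    by (rule sum.swap_restrict) auto
  moreover have "\<And>i. i \<in> {1..n} \<Longrightarrow> {m. m \<in> {1..<n} \<and> m < i} = {1..<i}" by auto
  moreover have "\<And>m. m \<in> {1..<n} \<Longrightarrow> {i. i \<in> {1..n} \<and> m < i} = {m+1..n}" by auto
  ultimately show ?thesis by simp
qed

definition T :: "nat \<Rightarrow> nat \<Rightarrow> real" where
  "T n m = (\<Sum>i\<in>{m+1..n}. real ((n+m) choose i))"

lemma Eform:
  assumes "1 \<le> n"
  shows "E n = 1 - (\<Sum>m\<in>{1..<n}. (-1)^m * (fact n / fact (n+m)) * T n m)"
proof -
  have a: "(-1)^n * fact n * ff 0 n = (1::real)"
    by (simp add: ff_def power_add[symmetric] mult_2[symmetric] power_mult)
  have b: "(-1)^n * fact n * ff i (n+m-i) = (-1)^m * (fact n / fact (n+m)) * real ((n+m) choose i)"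
    if "m < i" "i \<le> n" for i m
  proof -
    have "i + (n+m-i) = n+m" using that by simp
    have nn: "(-1::real)^n * (-1)^n = 1" by (simp add: power_mult_distrib[symmetric])
    have "(-1::real)^n * (-1)^(i + (n+m-i)) = (-1)^m"
      unfolding \<open>i + (n+m-i) = n+m\<close> by (simp add: power_add mult.assoc[symmetric] nn)
    moreover have "real ((n+m) choose i) = fact (n+m) / (fact i * fact (n+m-i))"
      using that by (simp add: binomial_fact)
    ultimately show ?thesis unfolding ff_def by (simp add: field_simps)
  qed
  have "E n = (-1)^n * fact n * ff 0 n - (\<Sum>m\<in>{1..<n}. \<Sum>i\<in>{m+1..n}. (-1)^n * fact n * ff i (n+m-i))"
    unfolding E_def Rdiff[OF assms] swap_tri by (simp add: sum_distrib_left right_diff_distrib)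
  also have "\<dots> = 1 - (\<Sum>m\<in>{1..<n}. \<Sum>i\<in>{m+1..n}. (-1)^m * (fact n / fact (n+m)) * real ((n+m) choose i))"
    using a b by (intro arg_cong2[where f="(-)"] sum.cong refl) auto
  finally show ?thesis unfolding T_def by (simp add: sum_distrib_left)
qed

lemma fact_bound: "fact n * real n ^ m \<le> fact (n+m)"
proof (induction m)
  case 0 then show ?case by simp
next
  case (Suc m)
  have "fact n * real n ^ Suc m = real n * (fact n * real n ^ m)" by simp
  also have "\<dots> \<le> real (Suc (n+m)) * fact (n+m)"
    by (rule mult_mono) (use Suc in auto)
  also have "\<dots> = fact (n + Suc m)" by (simp add: fact_Suc)
  finally show ?case .
qed

lemma T_nonneg: "0 \<le> T n m" unfolding T_def by (simp add: sum_nonneg)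

lemma T_le: "T n m \<le> 2 ^ (n+m)"
proof -
  have "T n m \<le> (\<Sum>i\<le>n+m. real ((n+m) choose i))"
    unfolding T_def by (rule sum_mono2) auto
  also have "\<dots> = 2 ^ (n+m)"
    by (metis choose_row_sum of_nat_sum of_nat_power of_nat_numeral)
  finally show ?thesis .
qed

lemma T_compl:
  assumes "m \<le> n" "1 \<le> n"
  shows "2 ^ (n+m) - T n m \<le> real (2*m+1) * real (n+m) ^ m"
proof -
  let ?c = "\<lambda>i. real ((n+m) choose i)"
  have "{..n+m} = {..m} \<union> ({m+1..n} \<union> {n+1..n+m})" using assms by auto
  hence "(\<Sum>i\<le>n+m. ?c i) = (\<Sum>i\<le>m. ?c i) + (T n m + (\<Sum>i\<in>{n+1..n+m}. ?c i))"
  proof -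
    have d1: "{m+1..n} \<inter> {n+1..n+m} = {}" by auto
    have d2: "{..m} \<inter> ({m+1..n} \<union> {n+1..n+m}) = {}" using assms by auto
    assume h: "{..n+m} = {..m} \<union> ({m+1..n} \<union> {n+1..n+m})"
    show ?thesis unfolding T_def h
      by (simp only: sum.union_disjoint[OF _ _ d2] sum.union_disjoint[OF _ _ d1] finite_atMost finite_atLeastAtMost finite_UnI)
  qed
  moreover have "(\<Sum>i\<le>n+m. ?c i) = 2 ^ (n+m)"
    by (metis choose_row_sum of_nat_sum of_nat_power of_nat_numeral)
  moreover have "(\<Sum>i\<le>m. ?c i) \<le> real (card {..m}) * real (n+m) ^ m"
  proof (rule sum_bounded_above)
    fix i assume "i \<in> {..m}"
    hence "(n+m) choose i \<le> (n+m) ^ i" "(n+m) ^ i \<le> (n+m)^m" using assms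
      by (auto intro: binomial_le_pow intro!: power_increasing)
    thus "?c i \<le> real (n+m) ^ m"
      by (metis of_nat_le_iff of_nat_power order_trans)
  qed
  moreover have "(\<Sum>i\<in>{n+1..n+m}. ?c i) \<le> real (card {n+1..n+m}) * real (n+m) ^ m"
  proof (rule sum_bounded_above)
    fix i assume i: "i \<in> {n+1..n+m}"
    hence "(n+m) choose i = (n+m) choose (n+m-i)" by (intro binomial_symmetric) auto
    moreover have "(n+m) choose (n+m-i) \<le> (n+m) ^ (n+m-i)" by (rule binomial_le_pow) simp
    moreover have "(n+m) ^ (n+m-i) \<le> (n+m)^m" using i
      by (intro power_increasing) auto
    ultimately show "?c i \<le> real (n+m) ^ m"
      by (metis of_nat_le_iff of_nat_power order_trans)
  qed
  ultimately show ?thesis by (simp add: algebra_simps)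
qed

lemma key_pow:
  assumes "4 \<le> n" "3 \<le> m"
  shows "(2 / real n) ^ m \<le> 8 / real n ^ 3 * (1/2) ^ (m - 3)"
proof -
  obtain k where k: "m = k + 3" using assms by (metis le_add_diff_inverse2)
  have "(2 / real n) ^ k \<le> (1/2) ^ k"
    by (rule power_mono) (use assms in \<open>auto simp: field_simps\<close>)
  hence "(2 / real n) ^ k * (8 / real n ^ 3) \<le> (1/2) ^ k * (8 / real n ^ 3)"
    by (rule mult_right_mono) simp
  thus ?thesis unfolding k by (simp add: power_add field_simps)
qed

lemma tail_bound:
  assumes "4 \<le> n"
  shows "\<bar>\<Sum>m\<in>{3..<n}. (-1)^m * (fact n / fact (n+m)) * T n m\<bar> \<le> 16 * 2 ^ n / real n ^ 3"
proof -
  have np: "real n > 0" using assms by simp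
  have trm: "\<bar>(-1)^m * (fact n / fact (n+m)) * T n m\<bar> \<le> 2^n * (8 / real n ^ 3) * (1/2) ^ (m - 3)"
    if "m \<in> {3..<n}" for m
  proof -
    have "\<bar>(-1)^m * (fact n / fact (n+m)) * T n m\<bar> = (fact n / fact (n+m)) * T n m"
      using T_nonneg by (simp add: abs_mult)
    also have "\<dots> \<le> (1 / real n ^ m) * 2 ^ (n+m)"
    proof (rule mult_mono)
      show "fact n / fact (n+m) \<le> 1 / real n ^ m"
        using fact_bound[of n m] np by (simp add: field_simps)
    qed (auto simp: T_le T_nonneg)
    also have "\<dots> = 2^n * (2 / real n) ^ m" by (simp add: power_add power_divide)
    also have "\<dots> \<le> 2^n * (8 / real n ^ 3 * (1/2) ^ (m - 3))"
      using key_pow[OF assms, of m] that by (intro mult_left_mono) auto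
    finally show ?thesis by simp
  qed
  have "\<bar>\<Sum>m\<in>{3..<n}. (-1)^m * (fact n / fact (n+m)) * T n m\<bar>
        \<le> (\<Sum>m\<in>{3..<n}. \<bar>(-1)^m * (fact n / fact (n+m)) * T n m\<bar>)" by (rule sum_abs)
  also have "\<dots> \<le> (\<Sum>m\<in>{3..<n}. 2^n * (8 / real n ^ 3) * (1/2) ^ (m - 3))"
    by (rule sum_mono) (rule trm)
  also have "\<dots> = 2^n * (8 / real n ^ 3) * (\<Sum>m\<in>{3..<n}. (1/2) ^ (m - 3))"
    by (simp add: sum_distrib_left)
  also have "(\<Sum>m\<in>{3..<n}. (1/2::real) ^ (m - 3)) = (\<Sum>k<n-3. (1/2) ^ k)"
    by (rule sum.reindex_bij_witness[where i="\<lambda>k. k+3" and j="\<lambda>m. m-3"]) auto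
  also have "\<dots> \<le> 2"
    by (simp add: sum_gp_strict)
  finally show ?thesis using np by (simp add: field_simps)
qed

lemma E_split:
  assumes "4 \<le> n"
  shows "E n = 1 + T n 1 / (real n + 1) - T n 2 / ((real n + 1) * (real n + 2))
              - (\<Sum>m\<in>{3..<n}. (-1)^m * (fact n / fact (n+m)) * T n m)"
proof -
  have "(\<Sum>m\<in>{1..<n}. (-1)^m * (fact n / fact (n+m)) * T n m)
      = (-1)^1 * (fact n / fact (n+1)) * T n 1 + ((-1)^2 * (fact n / fact (n+2)) * T n 2
        + (\<Sum>m\<in>{3..<n}. (-1)^m * (fact n / fact (n+m)) * T n m))"
  proof -
    have "{1..<n} = {1,2} \<union> {3..<n}" using assms by auto
    moreover have "{1,2} \<inter> {3..<n} = ({}::nat set)" by auto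
    ultimately show ?thesis by (simp add: sum.union_disjoint)
  qed
  moreover have "fact n / fact (n+1) = 1 / (real n + 1)"
  proof -
    have "fact (n+1) = (real n + 1) * fact n" by (simp add: fact_Suc algebra_simps)
    thus ?thesis by simp
  qed
  moreover have "fact n / fact (n+2) = 1 / ((real n + 1) * (real n + 2))"
  proof -
    have "fact (n+2) = ((real n + 1) * (real n + 2)) * fact n"
      by (simp add: numeral_2_eq_2 fact_Suc algebra_simps)
    thus ?thesis by simp
  qed
  ultimately show ?thesis using Eform[of n] assms by simp
qed

lemma alg:
  fixes x P a b t :: real
  assumes "x > 0"
  shows "1 + (P+a)/(x+1) - (2*P+b)/((x+1)*(x+2)) - t - P*(1/x - 3/x^2)
    = 1 + a/(x+1) - b/((x+1)*(x+2)) - t + P*(7*x+6)/(x^2*(x+1)*(x+2))"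
proof -
  have h1: "x + 1 \<noteq> 0" "x + 2 \<noteq> 0" "x \<noteq> 0" using assms by auto
  have "(P+a)/(x+1) = P/(x+1) + a/(x+1)" by (simp add: add_divide_distrib)
  moreover have "(2*P+b)/((x+1)*(x+2)) = 2*P/((x+1)*(x+2)) + b/((x+1)*(x+2))" by (simp add: add_divide_distrib)
  moreover have "P/(x+1) - 2*P/((x+1)*(x+2)) - P*(1/x - 3/x^2) = P*(7*x+6)/(x^2*(x+1)*(x+2))"
    using h1 by (simp add: divide_simps power2_eq_square) (simp add: algebra_simps)
  ultimately show ?thesis by simp
qed

lemma abs4:
  fixes u v w c :: real
  assumes "c \<ge> 0"
  shows "\<bar>1 + u - v - w + c\<bar> \<le> 1 + \<bar>u\<bar> + \<bar>v\<bar> + \<bar>w\<bar> + c"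
  unfolding abs_le_iff using assms abs_ge_self[of u] abs_ge_self[of v] abs_ge_self[of w]
    abs_ge_minus_self[of u] abs_ge_minus_self[of v] abs_ge_minus_self[of w] by linarith

definition K :: "nat \<Rightarrow> real" where
  "K n = 4 + 5 * (real n + 2) / (real n + 1) + 2 ^ (n+1) * (7 * real n + 6) / (real n ^ 2 * (real n + 1) * (real n + 2)) + 16 * 2 ^ n / real n ^ 3"

lemma main_bound:
  assumes "4 \<le> n"
  shows "\<bar>E n - 2 ^ (n + 1) * (1 / real n - 3 / real n ^ 2)\<bar> \<le> K n"
proof -
  define P :: real where "P = 2 ^ (n+1)"
  define a where "a = T n 1 - P"
  define b where "b = T n 2 - 2 * P"
  define t where "t = (\<Sum>m\<in>{3..<n}. (-1)^m * (fact n / fact (n+m)) * T n m)"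
  have np: "real n \<ge> 4" using assms by simp
  have c1: "real (2*1+1) * real (n+1) ^ 1 = 3 * (real n + 1)" by simp
  have c2: "real (2*2+1) * real (n+2) ^ 2 = 5 * (real n + 2) ^ 2" by simp
  have ha: "\<bar>a\<bar> \<le> 3 * (real n + 1)"
    using T_compl[of 1 n] T_le[of n 1] assms unfolding a_def P_def c1 by (simp only: abs_le_iff) simp
  have hb: "\<bar>b\<bar> \<le> 5 * (real n + 2) ^ 2"
    using T_compl[of 2 n] T_le[of n 2] assms unfolding b_def P_def c2 by (simp only: abs_le_iff) simp
  have ht: "\<bar>t\<bar> \<le> 16 * 2 ^ n / real n ^ 3" unfolding t_def by (rule tail_bound[OF assms])
  have eq: "E n - 2 ^ (n + 1) * (1 / real n - 3 / real n ^ 2)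
      = 1 + a / (real n + 1) - b / ((real n + 1) * (real n + 2)) - t
        + P * (7 * real n + 6) / (real n ^ 2 * (real n + 1) * (real n + 2))"
  proof -
    have e1: "E n = 1 + (P + a) / (real n + 1) - (2 * P + b) / ((real n + 1) * (real n + 2)) - t"
      unfolding E_split[OF assms] a_def b_def t_def by simp
    have e2: "2 ^ (n + 1) = P" unfolding P_def ..
    show ?thesis unfolding e1 e2 by (rule alg) (use np in simp)
  qed
  have p1: "real n + 1 > 0" "(real n + 1) * (real n + 2) > 0" using np by auto
  have "\<bar>a / (real n + 1)\<bar> = \<bar>a\<bar> / (real n + 1)" using p1 by simp
  also have "\<dots> \<le> 3 * (real n + 1) / (real n + 1)" by (rule divide_right_mono[OF ha]) (use p1 in simp)
  also have "\<dots> = 3" using p1 by (simp add: divide_simps)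
  finally have A: "\<bar>a / (real n + 1)\<bar> \<le> 3" .
  have "\<bar>b / ((real n + 1) * (real n + 2))\<bar> = \<bar>b\<bar> / ((real n + 1) * (real n + 2))" using p1 by simp
  also have "\<dots> \<le> 5 * (real n + 2) ^ 2 / ((real n + 1) * (real n + 2))"
    by (rule divide_right_mono[OF hb]) (use p1 in simp)
  also have "\<dots> = 5 * (real n + 2) / (real n + 1)" using np by (simp add: power2_eq_square)
  finally have B: "\<bar>b / ((real n + 1) * (real n + 2))\<bar> \<le> 5 * (real n + 2) / (real n + 1)" .
  have C: "P * (7 * real n + 6) / (real n ^ 2 * (real n + 1) * (real n + 2)) \<ge> 0"
    unfolding P_def using np by simp
  have "\<bar>E n - 2 ^ (n + 1) * (1 / real n - 3 / real n ^ 2)\<bar> \<le>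
     1 + \<bar>a / (real n + 1)\<bar> + \<bar>b / ((real n + 1) * (real n + 2))\<bar> + \<bar>t\<bar>
        + P * (7 * real n + 6) / (real n ^ 2 * (real n + 1) * (real n + 2))"
    unfolding eq using C by (rule abs4)
  also have "\<dots> \<le> K n" unfolding K_def P_def using A B ht by linarith
  finally show ?thesis .
qed

theorem corollary1:
  shows "(\<lambda>n. E n - 2 ^ (n + 1) * (1 / real n - 3 / real n ^ 2))
           \<in> O[at_top](\<lambda>n. 2 ^ (n + 1) / real n ^ 3)"
proof -
  have K_nonneg: "K n \<ge> 0" for n unfolding K_def by simp
  have "(\<lambda>n. E n - 2 ^ (n + 1) * (1 / real n - 3 / real n ^ 2)) \<in> O[at_top](K)"
  proof (rule landau_o.big_mono)
    show "\<forall>\<^sub>F n in at_top. norm (E n - 2 ^ (n + 1) * (1 / real n - 3 / real n ^ 2)) \<le> norm (K n)"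
      using eventually_ge_at_top[of "4::nat"]
      by eventually_elim (use main_bound K_nonneg in auto)
  qed
  also have "K \<in> O[at_top](\<lambda>n. 2 ^ (n + 1) / real n ^ 3)"
    unfolding K_def by real_asymp
  finally show ?thesis .
qed

end
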